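(* Let $\mathfrak{U}$ be a Banach algebra which coincides with the smallest closed subalgebra of $\mathfrak{U}$ containing every closed subalgebra $\mathfrak{V}\subseteq\mathfrak{U}$ for which $\mathfrak{V}^\sharp$ is symmetrically pseudo-amenable. Then for every Banach $\mathfrak{U}$-bimodule $X$, every bounded central derivation $\delta:\mathfrak{U}\to X$ is identically zero.
   Context: $\mathfrak{V}^\sharp=\mathfrak{V}\oplus\mathbb{C}1$ is the unitization of $\mathfrak{V}$ with the $\ell^1$-norm (a unit is adjoined even if $\mathfrak{V}$ is unital). A derivation $\delta:\mathfrak{U}\to X$ is central if $\delta(\mathfrak{U})\subseteq\mathcal{Z}_{\mathfrak{U}}(X)=\{x\in X: ax=xa\ \forall a\in\mathfrak{U}\}$; a derivation is a linear map with $\delta(ab)=\delta(a)b+a\delta(b)$. For a Banach algebra $\mathfrak{A}$, $\mathfrak{A}\widehat{\otimes}\mathfrak{A}$ is the projective tensor product with $a(b\otimes c)=ab\otimes c$, $(b\otimes c)a=b\otimes ca$, $\pi(b\otimes c)=bc$ (extended linearly and continuously); the flip is $(b\otimes c)^\circ=c\otimes b$ and $\mathbf{t}$ is symmetric if $\mathbf{t}^\circ=\mathbf{t}$. A symmetric approximate diagonal is a net $\{\mathbf{t}_\lambda\}$ (not necessarily bounded) of symmetric elements with $a\mathbf{t}_\lambda-\mathbf{t}_\lambda a\to0$ and $\pi(\mathbf{t}_\lambda)a\to a$ for all $a\in\mathfrak{A}$; $\mathfrak{A}$ is symmetrically pseudo-amenable if it has one. *)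

theory Defs
  imports "HOL-Analysis.Analysis"
begin

class cplx_vector = real_vector +
  fixes scaleC :: "complex \<Rightarrow> 'a \<Rightarrow> 'a"
  assumes scaleC_add_right: "scaleC c (x + y) = scaleC c x + scaleC c y"
    and scaleC_add_left: "scaleC (c + d) x = scaleC c x + scaleC d x"
    and scaleC_scaleC: "scaleC c (scaleC d x) = scaleC (c * d) x"
    and scaleC_one: "scaleC 1 x = x"
    and scaleR_scaleC: "scaleR r x = scaleC (complex_of_real r) x"

class cplx_normed_vector = cplx_vector + real_normed_vector +
  assumes norm_scaleC: "norm (scaleC c x) = cmod c * norm x"

class cplx_normed_algebra = cplx_normed_vector + real_normed_algebra +
  assumes scaleC_left_mult: "scaleC c x * y = scaleC c (x * y)"
    and scaleC_right_mult: "x * scaleC c y = scaleC c (x * y)"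

definition cplx_subalgebra :: "'a::cplx_normed_algebra set \<Rightarrow> bool" where
  "cplx_subalgebra V \<longleftrightarrow> 0 \<in> V \<and> (\<forall>x\<in>V. \<forall>y\<in>V. x + y \<in> V \<and> x * y \<in> V)
     \<and> (\<forall>c. \<forall>x\<in>V. scaleC c x \<in> V)"

definition closed_subalgebra :: "'a::cplx_normed_algebra set \<Rightarrow> bool" where
  "closed_subalgebra V \<longleftrightarrow> cplx_subalgebra V \<and> closed V"

section \<open>The unitization V# = V (+) C1 with the l1-norm, as pairs (v, lambda)\<close>

definition uset :: "'a set \<Rightarrow> ('a \<times> complex) set" where
  "uset V = V \<times> UNIV"

definition unorm :: "'a::cplx_normed_algebra \<times> complex \<Rightarrow> real" where
  "unorm x = norm (fst x) + cmod (snd x)"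

definition umult :: "'a::cplx_normed_algebra \<times> complex \<Rightarrow> 'a \<times> complex \<Rightarrow> 'a \<times> complex" where
  "umult x y = (fst x * fst y + scaleC (snd y) (fst x) + scaleC (snd x) (fst y), snd x * snd y)"

definition uscale :: "complex \<Rightarrow> 'a::cplx_normed_algebra \<times> complex \<Rightarrow> 'a \<times> complex" where
  "uscale c x = (scaleC c (fst x), c * snd x)"

text \<open>Bounded complex-bilinear forms on V# x V# of norm at most 1 (the unit ball of the
  dual of the projective tensor product).\<close>
definition bilin1 :: "'a::cplx_normed_algebra set \<Rightarrow> ('a \<times> complex \<Rightarrow> 'a \<times> complex \<Rightarrow> complex) \<Rightarrow> bool" where
  "bilin1 V phi \<longleftrightarrow>
     (\<forall>x\<in>uset V. \<forall>y\<in>uset V. \<forall>z\<in>uset V.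
        phi (x + y) z = phi x z + phi y z \<and> phi z (x + y) = phi z x + phi z y)
   \<and> (\<forall>c. \<forall>x\<in>uset V. \<forall>y\<in>uset V.
        phi (uscale c x) y = c * phi x y \<and> phi x (uscale c y) = c * phi x y)
   \<and> (\<forall>x\<in>uset V. \<forall>y\<in>uset V. cmod (phi x y) \<le> unorm x * unorm y)"

text \<open>Every element of the completed projective tensor product is of the form
  sum_n b_n (x) c_n with sum_n |b_n| |c_n| < infinity; such a sequence is a representation.\<close>
definition tensor_rep :: "'a::cplx_normed_algebra set \<Rightarrow> (nat \<Rightarrow> ('a \<times> complex) \<times> ('a \<times> complex)) \<Rightarrow> bool" where
  "tensor_rep V r \<longleftrightarrow> (\<forall>n. fst (r n) \<in> uset V \<and> snd (r n) \<in> uset V)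
     \<and> summable (\<lambda>n. unorm (fst (r n)) * unorm (snd (r n)))"

definition tev :: "('a \<times> complex \<Rightarrow> 'a \<times> complex \<Rightarrow> complex) \<Rightarrow> (nat \<Rightarrow> ('a \<times> complex) \<times> ('a \<times> complex)) \<Rightarrow> complex" where
  "tev phi r = (\<Sum>n. phi (fst (r n)) (snd (r n)))"

text \<open>The projective norm of a tensor, given through its pairing with bilinear forms
  (Hahn-Banach: the norm equals the sup over the dual unit ball).\<close>
definition pnorm :: "'a::cplx_normed_algebra set \<Rightarrow> (('a \<times> complex \<Rightarrow> 'a \<times> complex \<Rightarrow> complex) \<Rightarrow> complex) \<Rightarrow> real" where
  "pnorm V L = Sup {cmod (L phi) | phi. bilin1 V phi}"

text \<open>a t - t a, as a functional on bilinear forms.\<close>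
definition tcomm :: "'a::cplx_normed_algebra \<times> complex \<Rightarrow> (nat \<Rightarrow> ('a \<times> complex) \<times> ('a \<times> complex))
     \<Rightarrow> ('a \<times> complex \<Rightarrow> 'a \<times> complex \<Rightarrow> complex) \<Rightarrow> complex" where
  "tcomm a r phi = tev phi (\<lambda>n. (umult a (fst (r n)), snd (r n)))
                  - tev phi (\<lambda>n. (fst (r n), umult (snd (r n)) a))"

definition tflip :: "(nat \<Rightarrow> ('a \<times> complex) \<times> ('a \<times> complex)) \<Rightarrow> nat \<Rightarrow> ('a \<times> complex) \<times> ('a \<times> complex)" where
  "tflip r = (\<lambda>n. (snd (r n), fst (r n)))"

definition tsymmetric :: "'a::cplx_normed_algebra set \<Rightarrow> (nat \<Rightarrow> ('a \<times> complex) \<times> ('a \<times> complex)) \<Rightarrow> bool" where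
  "tsymmetric V r \<longleftrightarrow> (\<forall>phi. bilin1 V phi \<longrightarrow> tev phi (tflip r) = tev phi r)"

definition tpi :: "(nat \<Rightarrow> ('a::cplx_normed_algebra \<times> complex) \<times> ('a \<times> complex)) \<Rightarrow> 'a \<times> complex" where
  "tpi r = (\<Sum>n. umult (fst (r n)) (snd (r n)))"

text \<open>V# is symmetrically pseudo-amenable: there is a net (here: a proper filter on
  representations of tensors) of symmetric elements forming an approximate diagonal.\<close>
definition unitization_sym_pseudo_amenable :: "'a::{cplx_normed_algebra,banach} set \<Rightarrow> bool" where
  "unitization_sym_pseudo_amenable V \<longleftrightarrow>
    (\<exists>F :: (nat \<Rightarrow> ('a \<times> complex) \<times> ('a \<times> complex)) filter.
        F \<noteq> bot
      \<and> (\<forall>\<^sub>F r in F. tensor_rep V r \<and> tsymmetric V r)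
      \<and> (\<forall>a\<in>uset V. ((\<lambda>r. pnorm V (tcomm a r)) \<longlongrightarrow> 0) F)
      \<and> (\<forall>a\<in>uset V. ((\<lambda>r. unorm (umult (tpi r) a - a)) \<longlongrightarrow> 0) F))"

definition banach_bimodule ::
  "('a::{cplx_normed_algebra,banach} \<Rightarrow> 'x::{cplx_normed_vector,banach} \<Rightarrow> 'x) \<Rightarrow> ('x \<Rightarrow> 'a \<Rightarrow> 'x) \<Rightarrow> bool" where
  "banach_bimodule lm rm \<longleftrightarrow>
     (\<forall>a b x. lm (a + b) x = lm a x + lm b x \<and> rm x (a + b) = rm x a + rm x b)
   \<and> (\<forall>a x y. lm a (x + y) = lm a x + lm a y \<and> rm (x + y) a = rm x a + rm y a)
   \<and> (\<forall>c a x. lm (scaleC c a) x = scaleC c (lm a x) \<and> lm a (scaleC c x) = scaleC c (lm a x)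
            \<and> rm x (scaleC c a) = scaleC c (rm x a) \<and> rm (scaleC c x) a = scaleC c (rm x a))
   \<and> (\<forall>a b x. lm (a * b) x = lm a (lm b x) \<and> rm x (a * b) = rm (rm x a) b
            \<and> rm (lm a x) b = lm a (rm x b))
   \<and> (\<exists>K. \<forall>a x. norm (lm a x) \<le> K * norm a * norm x \<and> norm (rm x a) \<le> K * norm a * norm x)"

definition bounded_derivation ::
  "('a::{cplx_normed_algebra,banach} \<Rightarrow> 'x::{cplx_normed_vector,banach} \<Rightarrow> 'x) \<Rightarrow> ('x \<Rightarrow> 'a \<Rightarrow> 'x)
     \<Rightarrow> ('a \<Rightarrow> 'x) \<Rightarrow> bool" where
  "bounded_derivation lm rm d \<longleftrightarrow>
     (\<forall>a b. d (a + b) = d a + d b) \<and> (\<forall>c a. d (scaleC c a) = scaleC c (d a))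
   \<and> (\<exists>K. \<forall>a. norm (d a) \<le> K * norm a)
   \<and> (\<forall>a b. d (a * b) = rm (d a) b + lm a (d b))"

definition central_map ::
  "('a \<Rightarrow> 'x \<Rightarrow> 'x) \<Rightarrow> ('x \<Rightarrow> 'a \<Rightarrow> 'x) \<Rightarrow> ('a \<Rightarrow> 'x) \<Rightarrow> bool" where
  "central_map lm rm d \<longleftrightarrow> (\<forall>a b. lm a (d b) = rm (d b) a)"

end

theory Submission
  imports Defs
begin


definition goodG :: "('x::real_normed_vector \<times> real) set \<Rightarrow> bool" where
  "goodG G \<longleftrightarrow> (\<forall>x a y b. (x,a)\<in>G \<longrightarrow> (y,b)\<in>G \<longrightarrow> (x+y,a+b)\<in>G)
     \<and> (\<forall>x a c. (x,a)\<in>G \<longrightarrow> (c *\<^sub>R x, c*a)\<in>G) \<and> (\<forall>x a. (x,a)\<in>G \<longrightarrow> a \<le> norm x)"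

lemma goodG_fun:
  assumes g: "goodG G" and xa: "(x,a)\<in>G" and xb: "(x,b)\<in>G" shows "a = b"
proof -
  have "(x + (-1) *\<^sub>R x, a + (-1)*b) \<in> G" using g xa xb unfolding goodG_def by blast
  hence 1: "a - b \<le> 0" using g unfolding goodG_def by fastforce
  have "(x + (-1) *\<^sub>R x, b + (-1)*a) \<in> G" using g xa xb unfolding goodG_def by blast
  hence 2: "b - a \<le> 0" using g unfolding goodG_def by fastforce
  from 1 2 show ?thesis by simp
qed

lemma goodG_ext:
  fixes M :: "('x::real_normed_vector \<times> real) set"
  assumes g: "goodG M" and ne: "(0,0) \<in> M" and y: "\<forall>a. (y,a) \<notin> M"
  shows "\<exists>M'. goodG M' \<and> M \<subseteq> M' \<and> M' \<noteq> M"
proof -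
  define S where "S = {a - norm (x - y) | x a. (x,a)\<in>M}"
  have up: "s \<le> norm (z + y) - b" if "s \<in> S" "(z,b)\<in>M" for s z b
  proof -
    obtain x a where s: "s = a - norm (x - y)" and xa: "(x,a)\<in>M" using \<open>s\<in>S\<close> S_def by auto
    have "(x+z, a+b) \<in> M" using g xa that(2) unfolding goodG_def by blast
    hence "a + b \<le> norm (x+z)" using g unfolding goodG_def by blast
    also have "norm (x+z) \<le> norm (x - y) + norm (z + y)"
      using norm_triangle_ineq[of "x-y" "z+y"] by simp
    finally show ?thesis using s by simp
  qed
  have Sne: "S \<noteq> {}" using ne S_def by auto
  have bdd: "bdd_above S" using up ne by (meson bdd_above.I)
  define c where "c = Sup S"
  have c1: "a - norm (x - y) \<le> c" if "(x,a)\<in>M" for x a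
    unfolding c_def by (rule cSup_upper[OF _ bdd]) (use that S_def in auto)
  have c2: "c \<le> norm (z + y) - b" if "(z,b)\<in>M" for z b
    unfolding c_def by (rule cSup_least[OF Sne]) (use up that in auto)
  define M' where "M' = {(x + t *\<^sub>R y, a + t*c) | x a t. (x,a)\<in>M}"
  have "goodG M'"
    unfolding goodG_def
  proof (intro conjI allI impI)
    fix x a z b assume "(x,a)\<in>M'" "(z,b)\<in>M'"
    then obtain x1 a1 t1 x2 a2 t2 where "(x1,a1)\<in>M" "(x2,a2)\<in>M"
      "x = x1 + t1 *\<^sub>R y" "a = a1 + t1*c" "z = x2 + t2 *\<^sub>R y" "b = a2 + t2*c"
      unfolding M'_def by blast
    moreover have "(x1+x2, a1+a2)\<in>M" using g calculation unfolding goodG_def by blast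
    moreover have "(x+z, a+b) = ((x1+x2) + (t1+t2) *\<^sub>R y, (a1+a2) + (t1+t2)*c)"
      using calculation by (simp add: algebra_simps)
    ultimately show "(x+z, a+b)\<in>M'" unfolding M'_def by blast
  next
    fix x a r assume "(x,a)\<in>M'"
    then obtain x1 a1 t1 where "(x1,a1)\<in>M" "x = x1 + t1 *\<^sub>R y" "a = a1 + t1*c"
      unfolding M'_def by blast
    moreover have "(r *\<^sub>R x1, r*a1)\<in>M" using g calculation unfolding goodG_def by blast
    moreover have "(r *\<^sub>R x, r*a) = (r *\<^sub>R x1 + (r*t1) *\<^sub>R y, r*a1 + (r*t1)*c)"
      using calculation by (simp add: algebra_simps)
    ultimately show "(r *\<^sub>R x, r*a)\<in>M'" unfolding M'_def by blast
  next
    fix x a assume "(x,a)\<in>M'"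
    then obtain x1 a1 t where xa: "(x1,a1)\<in>M" and x: "x = x1 + t *\<^sub>R y" and a: "a = a1 + t*c"
      unfolding M'_def by blast
    consider "t = 0" | "t > 0" | "t < 0" by linarith
    then show "a \<le> norm x"
    proof cases
      case 1 then show ?thesis using g xa x a unfolding goodG_def by auto
    next
      case 2
      have "((1/t) *\<^sub>R x1, (1/t)*a1) \<in> M" using g xa unfolding goodG_def by blast
      from c2[OF this] have "c \<le> norm ((1/t) *\<^sub>R x1 + y) - (1/t)*a1" .
      hence "t*c \<le> t * (norm ((1/t) *\<^sub>R x1 + y) - (1/t)*a1)" using 2
        by (intro mult_left_mono) auto
      hence "t*c \<le> t * norm ((1/t) *\<^sub>R x1 + y) - a1" using 2
        by (simp add: right_diff_distrib)
      also have "t * norm ((1/t) *\<^sub>R x1 + y) = norm (t *\<^sub>R ((1/t) *\<^sub>R x1 + y))" using 2 by simp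
      also have "t *\<^sub>R ((1/t) *\<^sub>R x1 + y) = x" using 2 x by (simp add: algebra_simps)
      finally show ?thesis using a by simp
    next
      case 3
      define s where "s = -t"
      have s: "s > 0" using 3 s_def by simp
      have "((1/s) *\<^sub>R x1, (1/s)*a1) \<in> M" using g xa unfolding goodG_def by blast
      from c1[OF this] have "(1/s)*a1 - norm ((1/s) *\<^sub>R x1 - y) \<le> c" .
      hence "s * ((1/s)*a1 - norm ((1/s) *\<^sub>R x1 - y)) \<le> s*c" using s by (simp add: mult_left_mono)
      hence "a1 - s * norm ((1/s) *\<^sub>R x1 - y) \<le> s*c" using s by (simp add: algebra_simps)
      also have "s * norm ((1/s) *\<^sub>R x1 - y) = norm (s *\<^sub>R ((1/s) *\<^sub>R x1 - y))" using s by simp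
      also have "s *\<^sub>R ((1/s) *\<^sub>R x1 - y) = x" using s x s_def by (simp add: algebra_simps)
      finally show ?thesis using a s_def by simp
    qed
  qed
  moreover have "M \<subseteq> M'" unfolding M'_def by force
  moreover have "(y, c) \<in> M'" unfolding M'_def using ne by force
  ultimately show ?thesis using y by blast
qed

lemma real_HB:
  fixes x0 :: "'x::real_normed_vector"
  shows "\<exists>g. (\<forall>x y. g (x+y) = g x + g y) \<and> (\<forall>r x. g (r *\<^sub>R x) = r * g x)
     \<and> (\<forall>x. g x \<le> norm x) \<and> g x0 = norm x0"
proof -
  define G0 where "G0 = {(t *\<^sub>R x0, t * norm x0) | t. True}"
  define A where "A = {G. goodG G \<and> G0 \<subseteq> G}"
  have "goodG G0" unfolding goodG_def G0_def
  proof (intro conjI allI impI)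
    fix x a y b assume "(x,a) \<in> {(t *\<^sub>R x0, t * norm x0) |t. True}" "(y,b) \<in> {(t *\<^sub>R x0, t * norm x0) |t. True}"
    then obtain t1 t2 where "x = t1 *\<^sub>R x0" "a = t1 * norm x0" "y = t2 *\<^sub>R x0" "b = t2 * norm x0" by auto
    then have "(x+y,a+b) = ((t1+t2) *\<^sub>R x0, (t1+t2) * norm x0)" by (simp add: algebra_simps)
    then show "(x+y,a+b) \<in> {(t *\<^sub>R x0, t * norm x0) |t. True}" by blast
  next
    fix x a c assume "(x,a) \<in> {(t *\<^sub>R x0, t * norm x0) |t. True}"
    then obtain t1 where "x = t1 *\<^sub>R x0" "a = t1 * norm x0" by auto
    then have "(c *\<^sub>R x,c*a) = ((c*t1) *\<^sub>R x0, (c*t1) * norm x0)" by (simp add: algebra_simps)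
    then show "(c *\<^sub>R x,c*a) \<in> {(t *\<^sub>R x0, t * norm x0) |t. True}" by blast
  next
    fix x a assume "(x,a) \<in> {(t *\<^sub>R x0, t * norm x0) |t. True}"
    then obtain t1 where "x = t1 *\<^sub>R x0" "a = t1 * norm x0" by auto
    then show "a \<le> norm x" by (simp add: mult_right_mono abs_ge_self)
  qed
  hence "G0 \<in> A" unfolding A_def by auto
  have "\<exists>M\<in>A. \<forall>X\<in>A. M \<subseteq> X \<longrightarrow> X = M"
  proof (rule subset_Zorn_nonempty)
    show "A \<noteq> {}" using \<open>G0\<in>A\<close> by auto
  next
    fix C assume C: "C \<noteq> {}" "subset.chain A C"
    have CA: "C \<subseteq> A" and ch: "\<forall>X\<in>C. \<forall>Y\<in>C. X \<subseteq> Y \<or> Y \<subseteq> X"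
      using C(2) unfolding subset.chain_def by auto
    have "goodG (\<Union>C)" unfolding goodG_def
    proof (intro conjI allI impI)
      fix x a y b assume "(x,a)\<in>\<Union>C" "(y,b)\<in>\<Union>C"
      then obtain X Y where XY: "X\<in>C" "Y\<in>C" "(x,a)\<in>X" "(y,b)\<in>Y" by auto
      then consider "X \<subseteq> Y" | "Y \<subseteq> X" using ch by blast
      then show "(x+y,a+b)\<in>\<Union>C"
      proof cases
        case 1 then have "goodG Y" using CA XY A_def by auto
        then show ?thesis using 1 XY unfolding goodG_def by blast
      next
        case 2 then have "goodG X" using CA XY A_def by auto
        then show ?thesis using 2 XY unfolding goodG_def by blast
      qed
    next
      fix x a c assume "(x,a)\<in>\<Union>C"
      then obtain X where "X\<in>C" "(x,a)\<in>X" by auto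
      moreover then have "goodG X" using CA A_def by auto
      ultimately show "(c *\<^sub>R x, c*a)\<in>\<Union>C" unfolding goodG_def by blast
    next
      fix x a assume "(x,a)\<in>\<Union>C"
      then obtain X where "X\<in>C" "(x,a)\<in>X" by auto
      moreover then have "goodG X" using CA A_def by auto
      ultimately show "a \<le> norm x" unfolding goodG_def by blast
    qed
    moreover have "G0 \<subseteq> \<Union>C" using C CA A_def by auto
    ultimately show "\<Union>C \<in> A" unfolding A_def by auto
  qed
  then obtain M where MA: "M\<in>A" and max: "\<forall>X\<in>A. M \<subseteq> X \<longrightarrow> X = M" by blast
  have gM: "goodG M" and G0M: "G0 \<subseteq> M" using MA A_def by auto
  have zero: "(0,0)\<in>M" using G0M G0_def by force
  have dom: "\<exists>a. (x,a)\<in>M" for x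
  proof (rule ccontr)
    assume "\<not> ?thesis"
    then obtain M' where "goodG M'" "M \<subseteq> M'" "M' \<noteq> M" using goodG_ext[OF gM zero] by blast
    moreover then have "M' \<in> A" using G0M A_def by auto
    ultimately show False using max by blast
  qed
  define g where "g x = (THE a. (x,a)\<in>M)" for x
  have gx: "(x, g x) \<in> M" for x unfolding g_def
    using dom[of x] goodG_fun[OF gM] by (metis theI)
  have geq: "g x = a" if "(x,a)\<in>M" for x a using goodG_fun[OF gM gx that] .
  show ?thesis
  proof (intro exI[of _ g] conjI allI)
    fix x y show "g (x+y) = g x + g y"
      using gM gx[of x] gx[of y] geq unfolding goodG_def by blast
  next
    fix r x show "g (r *\<^sub>R x) = r * g x"
      using gM gx[of x] geq unfolding goodG_def by blast
  next
    fix x show "g x \<le> norm x" using gM gx unfolding goodG_def by blast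
  next
    show "g x0 = norm x0" using geq G0M G0_def by (metis (mono_tags, lifting) mem_Collect_eq scaleR_one mult_1 subsetD)
  qed
qed



lemma scaleC_decomp:
  fixes x :: "'x::cplx_vector"
  shows "scaleC c x = scaleR (Re c) x + scaleR (Im c) (scaleC \<i> x)"
proof -
  have "scaleR (Re c) x + scaleR (Im c) (scaleC \<i> x)
      = scaleC (complex_of_real (Re c)) x + scaleC (complex_of_real (Im c) * \<i>) x"
    by (simp add: scaleR_scaleC scaleC_scaleC)
  also have "\<dots> = scaleC (complex_of_real (Re c) + complex_of_real (Im c) * \<i>) x"
    by (simp add: scaleC_add_left)
  also have "complex_of_real (Re c) + complex_of_real (Im c) * \<i> = c"
    by (simp add: complex_eq_iff)
  finally show ?thesis by simp
qed

lemma cplx_HB: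
  fixes x0 :: "'x::cplx_normed_vector"
  assumes "x0 \<noteq> 0"
  shows "\<exists>f. (\<forall>x y. f (x+y) = f x + f y) \<and> (\<forall>c x. f (scaleC c x) = c * f x)
           \<and> (\<forall>x. cmod (f x) \<le> 2 * norm x) \<and> f x0 \<noteq> 0"
proof -
  obtain g :: "'x \<Rightarrow> real" where add: "\<And>x y. g (x+y) = g x + g y" and sc: "\<And>r x. g (r *\<^sub>R x) = r * g x"
    and le: "\<And>x. g x \<le> norm x" and g0: "g x0 = norm x0"
    using real_HB[of x0] by blast
  have abs_le: "\<bar>g x\<bar> \<le> norm x" for x
  proof -
    have "- g x = g ((-1) *\<^sub>R x)" using sc[of "-1" x] by simp
    also have "\<dots> \<le> norm x" using le[of "(-1) *\<^sub>R x"] by simp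
    finally show ?thesis using le[of x] by linarith
  qed
  define f where "f x = complex_of_real (g x) - \<i> * complex_of_real (g (scaleC \<i> x))" for x
  have gi: "g (scaleC c x) = Re c * g x + Im c * g (scaleC \<i> x)" for c x
    by (subst scaleC_decomp) (simp add: add sc)
  have nI: "norm (scaleC \<i> x) = norm x" for x :: 'x by (simp add: cplx_normed_vector_class.norm_scaleC)
  show ?thesis
  proof (intro exI[of _ f] conjI allI)
    fix x y show "f (x+y) = f x + f y" unfolding f_def by (simp add: add scaleC_add_right algebra_simps)
  next
    fix c x
    have h2: "g (scaleC \<i> (scaleC c x)) = - Im c * g x + Re c * g (scaleC \<i> x)"
      by (simp only: scaleC_scaleC gi[of "\<i>*c" x]) simp
    have h1: "g (scaleC c x) = Re c * g x + Im c * g (scaleC \<i> x)" by (rule gi)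
    show "f (scaleC c x) = c * f x" unfolding f_def h1 h2
      by (simp add: complex_eq_iff algebra_simps)
  next
    fix x
    have "cmod (f x) \<le> \<bar>g x\<bar> + \<bar>g (scaleC \<i> x)\<bar>" unfolding f_def
      using norm_triangle_ineq4[of "complex_of_real (g x)" "\<i> * complex_of_real (g (scaleC \<i> x))"]
      by (simp add: norm_mult)
    also have "\<dots> \<le> 2 * norm x" using abs_le[of x] abs_le[of "scaleC \<i> x"] nI[of x] by simp
    finally show "cmod (f x) \<le> 2 * norm x" .
  next
    have "Re (f x0) = norm x0" unfolding f_def by (simp add: g0)
    then show "f x0 \<noteq> 0" using assms by auto
  qed
qed



lemma scaleC_zero_left[simp]: "scaleC 0 (x::'x::cplx_vector) = 0"
  using scaleR_scaleC[of 0 x] by simp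

lemma scaleC_zero_right[simp]: "scaleC c (0::'x::cplx_vector) = 0"
  using scaleC_add_right[of c 0 0] by simp

lemma scaleC_commute: "scaleC a (scaleC b (x::'x::cplx_vector)) = scaleC b (scaleC a x)"
  by (simp add: scaleC_scaleC mult.commute)

lemma unorm_nonneg: "unorm p \<ge> 0" unfolding unorm_def by simp

lemma norm_le_unorm: "norm p \<le> unorm p"
  unfolding unorm_def by (cases p) (simp add: norm_Pair_le)

lemma unorm_le_norm: "unorm p \<le> 2 * norm p"
  unfolding unorm_def using norm_fst_le[of "fst p" "snd p"] norm_snd_le[of "snd p" "fst p"] by simp

lemma unorm_umult: "unorm (umult p q) \<le> unorm p * unorm q"
proof -
  obtain v l where p: "p = (v,l)" by (cases p)
  obtain w m where q: "q = (w,m)" by (cases q)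
  have "norm (v * w + scaleC m v + scaleC l w) \<le> norm (v * w) + norm (scaleC m v) + norm (scaleC l w)"
    by (meson add_mono norm_triangle_ineq order_trans order_refl)
  also have "\<dots> \<le> norm v * norm w + cmod m * norm v + cmod l * norm w"
    by (simp add: cplx_normed_vector_class.norm_scaleC norm_mult_ineq)
  finally have "norm (v * w + scaleC m v + scaleC l w) + cmod (l*m) \<le> (norm v + cmod l) * (norm w + cmod m)"
    by (simp add: norm_mult algebra_simps)
  then show ?thesis unfolding unorm_def umult_def p q by simp
qed

lemma scaleR_uscale: "scaleR r p = uscale (complex_of_real r) p"
  unfolding uscale_def by (cases p) (simp add: scaleR_scaleC scaleR_conv_of_real)

lemma umult_one: "umult p (0,1) = p"
  unfolding umult_def by (cases p) (simp add: scaleC_one)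

lemma umult_add_left: "umult (p + p') q = umult p q + umult p' q"
  unfolding umult_def by (simp add: distrib_right distrib_left scaleC_add_right scaleC_add_left algebra_simps)

lemma umult_add_right: "umult q (p + p') = umult q p + umult q p'"
  unfolding umult_def by (simp add: distrib_right distrib_left scaleC_add_right scaleC_add_left algebra_simps)

lemma umult_uscale_left: "umult (uscale c p) q = uscale c (umult p q)"
  unfolding umult_def uscale_def
  by (simp add: scaleC_left_mult scaleC_add_right scaleC_scaleC algebra_simps)

lemma umult_uscale_right: "umult p (uscale c q) = uscale c (umult p q)"
  unfolding umult_def uscale_def
  by (simp add: scaleC_right_mult scaleC_add_right scaleC_scaleC algebra_simps)

lemma sum_bound:
  fixes z :: "nat \<Rightarrow> 'b::banach"
  assumes B: "summable B" and le: "\<And>n. norm (z n) \<le> C * B n"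
  shows "summable z" "norm (suminf z) \<le> C * suminf B"
proof -
  have sB: "summable (\<lambda>n. C * B n)" using B by (rule summable_mult)
  have sn: "summable (\<lambda>n. norm (z n))"
    by (rule summable_comparison_test'[OF sB, of 0]) (simp add: le)
  then show "summable z" by (rule summable_norm_cancel)
  have "norm (suminf z) \<le> (\<Sum>n. norm (z n))" by (rule summable_norm[OF sn])
  also have "\<dots> \<le> (\<Sum>n. C * B n)" by (rule suminf_le[OF le sn sB])
  also have "\<dots> = C * suminf B" by (rule suminf_mult[OF B])
  finally show "norm (suminf z) \<le> C * suminf B" .
qed

lemma bilin_scaled:
  fixes phi :: "'a::cplx_normed_algebra \<times> complex \<Rightarrow> 'a \<times> complex \<Rightarrow> complex"
  assumes addl: "\<And>p p' q. phi (p + p') q = phi p q + phi p' q"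
    and addr: "\<And>p p' q. phi q (p + p') = phi q p + phi q p'"
    and scl: "\<And>c p q. phi (uscale c p) q = c * phi p q"
    and scr: "\<And>c p q. phi p (uscale c q) = c * phi p q"
    and bd: "\<And>p q. cmod (phi p q) \<le> C * (unorm p * unorm q)" and C: "C \<ge> 0"
  shows "bilin1 V (\<lambda>p q. phi p q / complex_of_real (C+1))"
  unfolding bilin1_def
proof (intro conjI ballI allI)
  fix p q
  have "cmod (phi p q / complex_of_real (C+1)) = cmod (phi p q) / (C+1)"
    using C by (simp add: norm_divide)
  also have "\<dots> \<le> unorm p * unorm q"
  proof -
    have "C * (unorm p * unorm q) \<le> (C+1) * (unorm p * unorm q)"
      using unorm_nonneg[of p] unorm_nonneg[of q] by (intro mult_right_mono) auto
    then show ?thesis using bd[of p q] C by (simp add: divide_le_eq mult.commute)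
  qed
  finally show "cmod (phi p q / complex_of_real (C+1)) \<le> unorm p * unorm q" .
qed (simp_all add: addl addr scl scr add_divide_distrib)



locale cder =
  fixes lm :: "'a::{cplx_normed_algebra,banach} \<Rightarrow> 'x::{cplx_normed_vector,banach} \<Rightarrow> 'x"
    and rm :: "'x \<Rightarrow> 'a \<Rightarrow> 'x"
    and d :: "'a \<Rightarrow> 'x"
  assumes bimod: "banach_bimodule lm rm"
    and der: "bounded_derivation lm rm d"
    and central: "central_map lm rm d"
begin

lemma rm_addL: "rm (x + y) a = rm x a + rm y a" using bimod unfolding banach_bimodule_def by blast
lemma rm_addR: "rm x (a + b) = rm x a + rm x b" using bimod unfolding banach_bimodule_def by blast
lemma lm_addL: "lm (a + b) x = lm a x + lm b x" using bimod unfolding banach_bimodule_def by blast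
lemma lm_addR: "lm a (x + y) = lm a x + lm a y" using bimod unfolding banach_bimodule_def by blast
lemma rm_scA: "rm x (scaleC c a) = scaleC c (rm x a)" using bimod unfolding banach_bimodule_def by blast
lemma rm_scX: "rm (scaleC c x) a = scaleC c (rm x a)" using bimod unfolding banach_bimodule_def by blast
lemma rm_mult: "rm x (a * b) = rm (rm x a) b" using bimod unfolding banach_bimodule_def by blast
lemma d_add: "d (a + b) = d a + d b" using der unfolding bounded_derivation_def by blast
lemma d_sc: "d (scaleC c a) = scaleC c (d a)" using der unfolding bounded_derivation_def by blast
lemma d_mult: "d (a * b) = rm (d a) b + lm a (d b)" using der unfolding bounded_derivation_def by blast
lemma cent: "lm a (d b) = rm (d b) a" using central unfolding central_map_def by blast

lemma rm_zeroX[simp]: "rm 0 a = 0" using rm_addL[of 0 0 a] by simp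
lemma rm_zeroA[simp]: "rm x 0 = 0" using rm_addR[of x 0 0] by simp
lemma d_zero[simp]: "d 0 = 0" using d_add[of 0 0] by simp

lemma K_ex: "\<exists>K\<ge>0. \<forall>a x. norm (rm x a) \<le> K * norm a * norm x"
proof -
  obtain K where K: "\<forall>a x. norm (rm x a) \<le> K * norm a * norm x"
    using bimod unfolding banach_bimodule_def by blast
  have "norm (rm x a) \<le> \<bar>K\<bar> * norm a * norm x" for a x
    using K[rule_format, of x a] by (smt (verit) abs_ge_self mult_right_mono norm_ge_zero mult_nonneg_nonneg)
  then show ?thesis by (intro exI[of _ "\<bar>K\<bar>"]) auto
qed

lemma Kd_ex: "\<exists>K\<ge>0. \<forall>a. norm (d a) \<le> K * norm a"
proof -
  obtain K where K: "\<forall>a. norm (d a) \<le> K * norm a"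
    using der unfolding bounded_derivation_def by blast
  have "norm (d a) \<le> \<bar>K\<bar> * norm a" for a
    using K[rule_format, of a] by (smt (verit) abs_ge_self mult_right_mono norm_ge_zero)
  then show ?thesis by (intro exI[of _ "\<bar>K\<bar>"]) auto
qed

lemma d_bl: "bounded_linear d"
proof -
  obtain K where K: "\<forall>a. norm (d a) \<le> K * norm a" using Kd_ex by blast
  show ?thesis
  proof (rule bounded_linear_intro[where K=K])
    show "d (x + y) = d x + d y" for x y by (rule d_add)
    show "d (r *\<^sub>R x) = r *\<^sub>R d x" for r x by (simp add: scaleR_scaleC d_sc)
    show "norm (d x) \<le> norm x * K" for x using K by (simp add: mult.commute)
  qed
qed

definition Rx :: "'x \<Rightarrow> 'a \<times> complex \<Rightarrow> 'x" where
  "Rx y p = rm y (fst p) + scaleC (snd p) y"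

lemma Rx_addL: "Rx (y + y') p = Rx y p + Rx y' p"
  unfolding Rx_def by (simp add: rm_addL scaleC_add_right algebra_simps)
lemma Rx_addR: "Rx y (p + p') = Rx y p + Rx y p'"
  unfolding Rx_def by (simp add: rm_addR scaleC_add_left algebra_simps)
lemma Rx_scL: "Rx (scaleC c y) p = scaleC c (Rx y p)"
  unfolding Rx_def by (simp add: rm_scX scaleC_add_right scaleC_commute)
lemma Rx_scR: "Rx y (uscale c p) = scaleC c (Rx y p)"
  unfolding Rx_def uscale_def by (simp add: rm_scA scaleC_add_right scaleC_scaleC)

lemma Rx_bound:
  assumes K: "K \<ge> 0" "\<forall>a x. norm (rm x a) \<le> K * norm a * norm x"
  shows "norm (Rx y p) \<le> (K+1) * norm y * unorm p"
proof -
  have "norm (Rx y p) \<le> norm (rm y (fst p)) + norm (scaleC (snd p) y)"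
    unfolding Rx_def by (rule norm_triangle_ineq)
  also have "\<dots> \<le> K * norm (fst p) * norm y + cmod (snd p) * norm y"
    using K by (intro add_mono) (auto simp: cplx_normed_vector_class.norm_scaleC)
  also have "\<dots> \<le> (K+1) * norm y * unorm p"
    using K unfolding unorm_def
    by (simp add: algebra_simps)
  finally show ?thesis .
qed

end


lemma uset_mem: "p \<in> uset V \<longleftrightarrow> fst p \<in> V" unfolding uset_def by (cases p) auto

lemma umult_in:
  assumes V: "cplx_subalgebra V" and p: "p \<in> uset V" and q: "q \<in> uset V"
  shows "umult p q \<in> uset V"
  using assms unfolding uset_mem umult_def cplx_subalgebra_def by simp

lemma tcomm_bound:
  fixes phi :: "'a::cplx_normed_algebra \<times> complex \<Rightarrow> 'a \<times> complex \<Rightarrow> complex"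
  assumes V: "cplx_subalgebra V" and a0: "a0 \<in> uset V" and r: "tensor_rep V r"
    and bd: "\<And>p q. p \<in> uset V \<Longrightarrow> q \<in> uset V \<Longrightarrow> cmod (phi p q) \<le> C * (unorm p * unorm q)"
    and C: "C \<ge> 0"
  shows "summable (\<lambda>n. phi (umult a0 (fst (r n))) (snd (r n)))"
    "summable (\<lambda>n. phi (fst (r n)) (umult (snd (r n)) a0))"
    "cmod (tcomm a0 r phi) \<le> 2 * (C * unorm a0) * (\<Sum>n. unorm (fst (r n)) * unorm (snd (r n)))"
proof -
  define B where "B n = unorm (fst (r n)) * unorm (snd (r n))" for n
  have sB: "summable B" using r unfolding tensor_rep_def B_def by auto
  have mem: "fst (r n) \<in> uset V" "snd (r n) \<in> uset V" for n using r unfolding tensor_rep_def by auto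
  have b1: "norm (phi (umult a0 (fst (r n))) (snd (r n))) \<le> (C * unorm a0) * B n" for n
  proof -
    have "norm (phi (umult a0 (fst (r n))) (snd (r n))) \<le> C * (unorm (umult a0 (fst (r n))) * unorm (snd (r n)))"
      using bd umult_in[OF V a0 mem(1)] mem(2) by simp
    also have "\<dots> \<le> C * ((unorm a0 * unorm (fst (r n))) * unorm (snd (r n)))"
      by (intro mult_left_mono mult_right_mono unorm_umult unorm_nonneg C)
    finally show ?thesis by (simp add: B_def algebra_simps)
  qed
  have b2: "norm (phi (fst (r n)) (umult (snd (r n)) a0)) \<le> (C * unorm a0) * B n" for n
  proof -
    have "norm (phi (fst (r n)) (umult (snd (r n)) a0)) \<le> C * (unorm (fst (r n)) * unorm (umult (snd (r n)) a0))"
      using bd umult_in[OF V mem(2) a0] mem(1) by simp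
    also have "\<dots> \<le> C * (unorm (fst (r n)) * (unorm (snd (r n)) * unorm a0))"
      by (intro mult_left_mono unorm_umult unorm_nonneg C)
    finally show ?thesis by (simp add: B_def algebra_simps)
  qed
  show s1: "summable (\<lambda>n. phi (umult a0 (fst (r n))) (snd (r n)))" by (rule sum_bound(1)[OF sB b1])
  show s2: "summable (\<lambda>n. phi (fst (r n)) (umult (snd (r n)) a0))" by (rule sum_bound(1)[OF sB b2])
  have "cmod (tcomm a0 r phi) \<le> cmod (\<Sum>n. phi (umult a0 (fst (r n))) (snd (r n))) + cmod (\<Sum>n. phi (fst (r n)) (umult (snd (r n)) a0))"
    unfolding tcomm_def tev_def by (simp add: norm_triangle_ineq4)
  also have "\<dots> \<le> (C * unorm a0) * suminf B + (C * unorm a0) * suminf B"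
    by (intro add_mono sum_bound(2)[OF sB b1] sum_bound(2)[OF sB b2])
  finally show "cmod (tcomm a0 r phi) \<le> 2 * (C * unorm a0) * (\<Sum>n. unorm (fst (r n)) * unorm (snd (r n)))"
    by (simp add: B_def[abs_def] algebra_simps)
qed

context cder begin

lemma vanish:
  assumes V: "closed_subalgebra V" and am: "unitization_sym_pseudo_amenable V" and aV: "a \<in> V"
  shows "d a = 0"
proof -
  obtain K where K: "K \<ge> 0" "\<forall>a x. norm (rm x a) \<le> K * norm a * norm x" using K_ex by blast
  obtain Kd where Kd: "Kd \<ge> 0" "\<forall>a. norm (d a) \<le> Kd * norm a" using Kd_ex by blast
  have Vs: "cplx_subalgebra V" using V unfolding closed_subalgebra_def by auto
  define x where "x = d a"
  have key: "f x = 0" if fadd: "\<forall>y z. f (y+z) = f y + f z" and fsc: "\<forall>c y. f (scaleC c y) = c * f y"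
      and fb: "\<forall>y. cmod (f y) \<le> 2 * norm y" for f :: "'x \<Rightarrow> complex"
  proof -
    have fdiff: "f (y - z) = f y - f z" for y z using fadd[rule_format, of "y - z" z] by simp
    define phi where "phi p (q::'a \<times> complex) = f (Rx (d (fst q)) p)" for p q
    define psi where "psi p = f (Rx x p)" for p
    define psi2 where "psi2 p q = psi (umult p q)" for p q
    define a0 where "a0 = (a, 0::complex)"
    define Cphi where "Cphi = 2 * ((K+1) * Kd)"
    define Cpsi where "Cpsi = 2 * ((K+1) * norm x)"
    have Cphi0: "Cphi \<ge> 0" and Cpsi0: "Cpsi \<ge> 0" using K Kd unfolding Cphi_def Cpsi_def by auto
    have phi_bd: "cmod (phi p q) \<le> Cphi * (unorm p * unorm q)" for p q
    proof -
      have "cmod (phi p q) \<le> 2 * norm (Rx (d (fst q)) p)" unfolding phi_def using fb by blast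
      also have "\<dots> \<le> 2 * ((K+1) * norm (d (fst q)) * unorm p)" using Rx_bound[OF K] by simp
      also have "\<dots> \<le> 2 * ((K+1) * (Kd * unorm q) * unorm p)"
      proof -
        have "norm (d (fst q)) \<le> Kd * unorm q"
        proof -
          have "norm (fst q) \<le> unorm q" unfolding unorm_def by simp
          then have "Kd * norm (fst q) \<le> Kd * unorm q" using Kd(1) by (rule mult_left_mono)
          then show ?thesis using Kd(2)[rule_format, of "fst q"] by linarith
        qed
        then show ?thesis using K unorm_nonneg[of p] by (intro mult_left_mono mult_right_mono) auto
      qed
      finally show ?thesis unfolding Cphi_def by (simp add: algebra_simps)
    qed
    have psi_bd: "cmod (psi p) \<le> Cpsi * unorm p" for p
    proof -
      have "cmod (psi p) \<le> 2 * norm (Rx x p)" unfolding psi_def using fb by blast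
      also have "\<dots> \<le> 2 * ((K+1) * norm x * unorm p)" using Rx_bound[OF K] by simp
      finally show ?thesis unfolding Cpsi_def by (simp add: algebra_simps)
    qed
    have psi2_bd: "cmod (psi2 p q) \<le> Cpsi * (unorm p * unorm q)" for p q
      unfolding psi2_def by (rule order_trans[OF psi_bd mult_left_mono[OF unorm_umult Cpsi0]])
    have psi_add: "psi (p + p') = psi p + psi p'" for p p' unfolding psi_def by (simp add: Rx_addR fadd)
    have psi_sc: "psi (uscale c p) = c * psi p" for c p unfolding psi_def by (simp add: Rx_scR fsc)
    have bil_phi: "bilin1 V (\<lambda>p q. phi p q / complex_of_real (Cphi+1))"
    proof (rule bilin_scaled[OF _ _ _ _ phi_bd Cphi0])
      show "phi (p + p') q = phi p q + phi p' q" for p p' q unfolding phi_def by (simp add: Rx_addR fadd)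
      show "phi q (p + p') = phi q p + phi q p'" for p p' q unfolding phi_def by (simp add: d_add Rx_addL fadd)
      show "phi (uscale c p) q = c * phi p q" for c p q unfolding phi_def by (simp add: Rx_scR fsc)
      show "phi p (uscale c q) = c * phi p q" for c p q unfolding phi_def uscale_def by (simp add: d_sc Rx_scL fsc)
    qed
    have bil_psi2: "bilin1 V (\<lambda>p q. psi2 p q / complex_of_real (Cpsi+1))"
    proof (rule bilin_scaled[OF _ _ _ _ psi2_bd Cpsi0])
      show "psi2 (p + p') q = psi2 p q + psi2 p' q" for p p' q unfolding psi2_def by (simp add: umult_add_left psi_add)
      show "psi2 q (p + p') = psi2 q p + psi2 q p'" for p p' q unfolding psi2_def by (simp add: umult_add_right psi_add)
      show "psi2 (uscale c p) q = c * psi2 p q" for c p q unfolding psi2_def by (simp add: umult_uscale_left psi_sc)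
      show "psi2 p (uscale c q) = c * psi2 p q" for c p q unfolding psi2_def by (simp add: umult_uscale_right psi_sc)
    qed
    have psi_bl: "bounded_linear psi"
    proof (rule bounded_linear_intro[where K="2*Cpsi"])
      show "psi (p + p') = psi p + psi p'" for p p' by (rule psi_add)
      show "psi (r *\<^sub>R p) = r *\<^sub>R psi p" for r p by (simp add: scaleR_uscale psi_sc scaleR_conv_of_real)
      show "norm (psi p) \<le> norm p * (2*Cpsi)" for p
      proof -
        have "Cpsi * unorm p \<le> Cpsi * (2 * norm p)" using unorm_le_norm[of p] Cpsi0 by (rule mult_left_mono)
        then show ?thesis using psi_bd[of p] by (simp add: algebra_simps)
      qed
    qed
    have psi_one: "psi (0,1) = f x" unfolding psi_def Rx_def by (simp add: scaleC_one)
    have identX: "Rx (d (fst (umult q a0))) p = Rx (d (fst q)) (umult a0 p) + Rx x (umult q p)" for p q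
    proof -
      obtain v l where p: "p = (v,l)" by (cases p)
      obtain w m where q: "q = (w,m)" by (cases q)
      have e1: "d (fst (umult q a0)) = rm (d w) a + rm x w + scaleC m x"
        unfolding q a0_def umult_def x_def by (simp add: d_add d_sc d_mult cent)
      show ?thesis unfolding e1 unfolding p q a0_def umult_def Rx_def
        by (simp add: rm_addL rm_addR rm_scA rm_scX rm_mult scaleC_add_right scaleC_scaleC algebra_simps)
    qed
    have ident: "phi (umult a0 p) q - phi p (umult q a0) = - psi2 q p" for p q
      unfolding phi_def psi2_def psi_def identX using fadd by simp

    have a0V: "a0 \<in> uset V" unfolding a0_def uset_mem using aV by simp
    have phi_bdV: "cmod (phi p q) \<le> Cphi * (unorm p * unorm q)" if "p \<in> uset V" "q \<in> uset V" for p q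
      by (rule phi_bd)
    have main: "tcomm a0 r phi = - psi (tpi r) \<and> cmod (tcomm a0 r phi) \<le> (Cphi+1) * pnorm V (tcomm a0 r)"
      if r: "tensor_rep V r" and sym: "tsymmetric V r" for r
    proof
      define b where "b n = fst (r n)" for n
      define c where "c n = snd (r n)" for n
      define B where "B n = unorm (b n) * unorm (c n)" for n
      have sB: "summable B" using r unfolding tensor_rep_def B_def b_def c_def by auto
      note tb = tcomm_bound[OF Vs a0V r phi_bdV Cphi0]
      have s1: "summable (\<lambda>n. phi (umult a0 (b n)) (c n))" using tb(1) unfolding b_def c_def .
      have s2: "summable (\<lambda>n. phi (b n) (umult (c n) a0))" using tb(2) unfolding b_def c_def .
      have sp1: "summable (\<lambda>n. psi2 (c n) (b n))"
        by (rule sum_bound(1)[OF sB, of _ Cpsi]) (metis psi2_bd B_def mult.commute)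
      have sp2: "summable (\<lambda>n. psi2 (b n) (c n))"
        by (rule sum_bound(1)[OF sB, of _ Cpsi]) (simp add: psi2_bd B_def)
      have su: "summable (\<lambda>n. umult (b n) (c n))"
      proof (rule sum_bound(1)[OF sB, of _ 1])
        fix n show "norm (umult (b n) (c n)) \<le> 1 * B n"
          using norm_le_unorm[of "umult (b n) (c n)"] unorm_umult[of "b n" "c n"] unfolding B_def by simp
      qed
      have "tcomm a0 r phi = (\<Sum>n. phi (umult a0 (b n)) (c n)) - (\<Sum>n. phi (b n) (umult (c n) a0))"
        unfolding tcomm_def tev_def b_def c_def by simp
      also have "\<dots> = (\<Sum>n. - psi2 (c n) (b n))"
        unfolding suminf_diff[OF s1 s2] ident ..
      also have "\<dots> = - (\<Sum>n. psi2 (c n) (b n))" by (rule suminf_minus[OF sp1])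
      also have "(\<Sum>n. psi2 (c n) (b n)) = (\<Sum>n. psi2 (b n) (c n))"
      proof -
        have "tev (\<lambda>p q. psi2 p q / complex_of_real (Cpsi+1)) (tflip r) = tev (\<lambda>p q. psi2 p q / complex_of_real (Cpsi+1)) r"
          using sym bil_psi2 unfolding tsymmetric_def by blast
        then have "(\<Sum>n. psi2 (c n) (b n) / complex_of_real (Cpsi+1)) = (\<Sum>n. psi2 (b n) (c n) / complex_of_real (Cpsi+1))"
          unfolding tev_def tflip_def b_def c_def by simp
        then have "(\<Sum>n. psi2 (c n) (b n)) / complex_of_real (Cpsi+1) = (\<Sum>n. psi2 (b n) (c n)) / complex_of_real (Cpsi+1)"
          unfolding suminf_divide[OF sp1] suminf_divide[OF sp2] .
        moreover have "complex_of_real (Cpsi+1) \<noteq> 0"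
        proof -
          have "Cpsi + 1 \<noteq> 0" using Cpsi0 by simp
          then show ?thesis by (metis of_real_eq_0_iff)
        qed
        ultimately show ?thesis by simp
      qed
      also have "(\<Sum>n. psi2 (b n) (c n)) = psi (tpi r)"
        unfolding psi2_def tpi_def b_def[symmetric] c_def[symmetric]
        using bounded_linear.suminf[OF psi_bl su] by simp
      finally show "tcomm a0 r phi = - psi (tpi r)" .
      define phiM where "phiM p q = phi p q / complex_of_real (Cphi+1)" for p q
      have bil: "bilin1 V phiM" using bil_phi unfolding phiM_def by simp
      have "tcomm a0 r phiM = tcomm a0 r phi / complex_of_real (Cphi+1)"
        unfolding tcomm_def tev_def phiM_def
        using suminf_divide[OF tb(1)] suminf_divide[OF tb(2)] by (simp add: diff_divide_distrib)
      then have eqM: "cmod (tcomm a0 r phi) = (Cphi+1) * cmod (tcomm a0 r phiM)"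
        using Cphi0 by (simp add: norm_divide)
      have bdd: "bdd_above {cmod (tcomm a0 r phi') | phi'. bilin1 V phi'}"
      proof (rule bdd_aboveI)
        fix y assume "y \<in> {cmod (tcomm a0 r phi') | phi'. bilin1 V phi'}"
        then obtain phi' where y: "y = cmod (tcomm a0 r phi')" and b1: "bilin1 V phi'" by blast
        have "cmod (phi' p q) \<le> 1 * (unorm p * unorm q)" if "p \<in> uset V" "q \<in> uset V" for p q
          using b1 that unfolding bilin1_def by simp
        from tcomm_bound(3)[OF Vs a0V r this] show "y \<le> 2 * (1 * unorm a0) * (\<Sum>n. unorm (fst (r n)) * unorm (snd (r n)))"
          using y by simp
      qed
      have "cmod (tcomm a0 r phiM) \<le> pnorm V (tcomm a0 r)"
        unfolding pnorm_def by (rule cSup_upper[OF _ bdd]) (use bil in blast)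
      then show "cmod (tcomm a0 r phi) \<le> (Cphi+1) * pnorm V (tcomm a0 r)"
        unfolding eqM using Cphi0 by (intro mult_left_mono) auto
    qed
    obtain F :: "(nat \<Rightarrow> ('a \<times> complex) \<times> ('a \<times> complex)) filter" where
      Fne: "F \<noteq> bot" and ev: "\<forall>\<^sub>F r in F. tensor_rep V r \<and> tsymmetric V r"
      and L2: "\<forall>a\<in>uset V. ((\<lambda>r. pnorm V (tcomm a r)) \<longlongrightarrow> 0) F"
      and L1: "\<forall>a\<in>uset V. ((\<lambda>r. unorm (umult (tpi r) a - a)) \<longlongrightarrow> 0) F"
      using am unfolding unitization_sym_pseudo_amenable_def by blast
    have oneV: "(0::'a, 1::complex) \<in> uset V" using Vs unfolding uset_mem cplx_subalgebra_def by simp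
    have L1': "((\<lambda>r. unorm (tpi r - (0,1))) \<longlongrightarrow> 0) F" using L1[rule_format, OF oneV] unfolding umult_one .
    have lim1: "((\<lambda>r. psi (tpi r) - f x) \<longlongrightarrow> 0) F"
    proof (rule Lim_null_comparison)
      show "\<forall>\<^sub>F r in F. norm (psi (tpi r) - f x) \<le> Cpsi * unorm (tpi r - (0,1))"
      proof (rule always_eventually, rule allI)
        fix r
        have "psi (tpi r) - f x = psi (tpi r - (0,1))"
          using psi_add[of "tpi r - (0,1)" "(0,1)"] psi_one by simp
        then show "norm (psi (tpi r) - f x) \<le> Cpsi * unorm (tpi r - (0,1))" using psi_bd by simp
      qed
      show "((\<lambda>r. Cpsi * unorm (tpi r - (0,1))) \<longlongrightarrow> 0) F"
        using tendsto_mult[OF tendsto_const L1'] by simp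
    qed
    have lim2: "((\<lambda>r. psi (tpi r)) \<longlongrightarrow> 0) F"
    proof (rule Lim_null_comparison)
      show "\<forall>\<^sub>F r in F. norm (psi (tpi r)) \<le> (Cphi+1) * pnorm V (tcomm a0 r)"
        using ev
      proof (rule eventually_mono)
        fix r assume "tensor_rep V r \<and> tsymmetric V r"
        then have "tcomm a0 r phi = - psi (tpi r) \<and> cmod (tcomm a0 r phi) \<le> (Cphi+1) * pnorm V (tcomm a0 r)"
          using main by blast
        then show "norm (psi (tpi r)) \<le> (Cphi+1) * pnorm V (tcomm a0 r)" by (metis norm_minus_cancel)
      qed
      show "((\<lambda>r. (Cphi+1) * pnorm V (tcomm a0 r)) \<longlongrightarrow> 0) F"
        using tendsto_mult[OF tendsto_const L2[rule_format, OF a0V]] by simp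
    qed
    have "((\<lambda>r. psi (tpi r) - (psi (tpi r) - f x)) \<longlongrightarrow> 0 - 0) F"
      by (rule tendsto_diff[OF lim2 lim1])
    then have "((\<lambda>r. f x) \<longlongrightarrow> 0) F" by simp
    then show "f x = 0" using tendsto_const_iff[of F "f x" 0] Fne by simp
  qed
  show ?thesis
  proof (rule ccontr)
    assume "d a \<noteq> 0"
    then obtain f :: "'x \<Rightarrow> complex" where "\<forall>y z. f (y+z) = f y + f z" "\<forall>c y. f (scaleC c y) = c * f y"
      "\<forall>y. cmod (f y) \<le> 2 * norm y" "f (d a) \<noteq> 0"
      using cplx_HB[of "d a"] by blast
    then show False using key x_def by blast
  qed
qed
end

theorem corollary6p2:
  fixes lm :: "'a::{cplx_normed_algebra,banach} \<Rightarrow> 'x::{cplx_normed_vector,banach} \<Rightarrow> 'x"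
    and rm :: "'x \<Rightarrow> 'a \<Rightarrow> 'x"
    and d :: "'a \<Rightarrow> 'x"
  assumes gen: "(UNIV :: 'a set) = \<Inter> {W. closed_subalgebra W \<and>
                  (\<forall>V. closed_subalgebra V \<and> unitization_sym_pseudo_amenable V \<longrightarrow> V \<subseteq> W)}"
    and bimod: "banach_bimodule lm rm"
    and der: "bounded_derivation lm rm d"
    and central: "central_map lm rm d"
  shows "\<forall>a. d a = 0"
proof -
  interpret cder lm rm d using bimod der central by unfold_locales
  define W where "W = {a. d a = 0}"
  have "cplx_subalgebra W"
  proof -
    have "lm x 0 = 0" for x using lm_addR[of x 0 0] by simp
    then show ?thesis unfolding W_def cplx_subalgebra_def by (simp add: d_add d_mult d_sc)
  qed
  moreover have "closed W" unfolding W_def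
    by (rule closed_Collect_eq) (auto intro: bounded_linear.continuous_on[OF d_bl] continuous_on_id)
  ultimately have "closed_subalgebra W" unfolding closed_subalgebra_def by simp
  moreover have "\<forall>V. closed_subalgebra V \<and> unitization_sym_pseudo_amenable V \<longrightarrow> V \<subseteq> W"
    unfolding W_def using vanish by blast
  ultimately have "UNIV \<subseteq> W" using gen by blast
  then show ?thesis unfolding W_def by blast
qed

end
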